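(* For an ADP problem $\langle\mathcal{P},\mathcal{S}\rangle$ let \[\mathcal{P}'=\mathcal{U}(\mathcal{P})\cup\{\ell\to\mu^{\mathsf{false}}\mid \ell\to\mu^m\in\mathcal{P}\setminus\mathcal{U}(\mathcal{P})\},\qquad \mathcal{S}'=(\mathcal{S}\cap\mathcal{U}(\mathcal{P}))\cup\{\ell\to\mu^{\mathsf{false}}\mid\ell\to\mu^m\in\mathcal{S}\setminus\mathcal{U}(\mathcal{P})\}.\] Then the processor $\mathrm{Proc}_{\mathtt{UR}}(\langle\mathcal{P},\mathcal{S}\rangle)=(\mathrm{Pol}_0,\{\langle\mathcal{P}',\mathcal{S}'\rangle\})$ is sound.
   Context: Annotated dependency pairs (ADPs): over a finite signature $\Sigma$ with fresh annotated copies $f^\sharp$ of symbols, an ADP is $\ell\to\{p_1:r_1,\dots,p_k:r_k\}^m$ with $\ell$ a non-variable unannotated term, $r_j$ possibly annotated with $\mathcal{V}(r_j)\subseteq\mathcal{V}(\ell)$, $0<p_j\le1$, $\sum p_j=1$, flag $m\in\{\mathsf{true},\mathsf{false}\}$; $\operatorname{Supp}(\{p_j:r_j\})$ is the multiset of the $r_j$. For a set $\mathcal{P}$, defined symbols are roots of left-hand sides; basic terms are $f(t_1,\dots,t_k)$ with $f$ defined, $t_i$ free of defined symbols; $|t|$ term size; $\flat$ removes all annotations, $t^\sharp$ annotates the root, $\flat^\uparrow_\pi$ removes annotations strictly above $\pi$; $t\trianglelefteq_\sharp s$ means $t=\flat(s|_\pi)$ for some position $\pi$ of $s$ carrying an annotated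 symbol. Rewriting with $\mathcal{P}$ (innermost): at a position $\pi$ with defined or annotated symbol, ADP $\ell\to\{p_j:r_j\}^m\in\mathcal{P}$, $\sigma$ with $\flat(s|_\pi)=\ell\sigma$ whose proper subterms are normal forms: $t_j=s[r_j\sigma]_\pi$ (at: $m=\mathsf{true}$, $\pi$ annotated), $s[\flat(r_j)\sigma]_\pi$ (nt), $\flat^\uparrow_\pi(s[r_j\sigma]_\pi)$ (af), $\flat^\uparrow_\pi(s[\flat(r_j)\sigma]_\pi)$ (nf). $\mathcal{P}$-chain trees: possibly infinite finitely-branching trees with nodes $(p_v:t_v)$, root probability 1, $t_v$ rewriting to $\{\tfrac{p_w}{p_v}:t_w\}_{w}$ at inner nodes. For $\mathcal{S}\subseteq\mathcal{P}$: $\operatorname{edl}_{\langle\mathcal{P},\mathcal{S}\rangle}(\mathfrak{T})$ sums $p_v$ over inner nodes rewritten by (at)/(af)-steps with ADPs in $\mathcal{S}$; $\operatorname{edh}_{\langle\mathcal{P},\mathcal{S}\rangle}(t)$ = sup over chain trees rooted at $t^\sharp$ ($t$ basic); $\iota_{\langle\mathcal{P},\mathcal{S}\rangle}=\iota(n\mapsto\sup\{\operatorname{edh}_{\langle\mathcal{P},\mathcal{S}\rangle}(t)\mid t\text{ basic},|t|\le n\})$, where complexities $\mathfrak{C}=\{\mathrm{Pol}_0,\mathrm{Pol}_1,\dots,\mathrm{Exp},\mathrm{2\text{-}Exp},\mathrm{Fin},\omega\}$ are ordered in that order, $\oplus$ is maximum, and $\iota(f)=\mathrm{Pol}_a$ for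 least $a$ with $f\in O(n^a)$, else $\mathrm{Exp}$ if $f\in O(2^{\mathrm{pol}(n)})$, else $\mathrm{2\text{-}Exp}$ if $f\in O(2^{2^{\mathrm{pol}(n)}})$, else $\mathrm{Fin}$ if $f$ never equals $\omega$, else $\omega$. Usable rules: $\mathrm{Rules}_{\mathcal{P}}(f)=\{\ell\to\mu^{\mathsf{true}}\in\mathcal{P}\mid\operatorname{root}(\ell)=f\}$. $\mathcal{U}_{\mathcal{P}}(t)=\emptyset$ if $t$ is a variable or $\mathcal{P}=\emptyset$; $\mathcal{U}_{\mathcal{P}}(f(t_1,\dots,t_n))=\mathrm{Rules}_{\mathcal{P}}(f)\cup\bigcup_j\mathcal{U}_{\mathcal{P}'}(t_j)\cup\bigcup_{\ell\to\mu^{\mathsf{true}}\in\mathrm{Rules}_{\mathcal{P}}(f),\,r\in\operatorname{Supp}(\mu)}\mathcal{U}_{\mathcal{P}'}(\flat(r))$ with $\mathcal{P}'=\mathcal{P}\setminus\mathrm{Rules}_{\mathcal{P}}(f)$. $\mathcal{U}(\mathcal{P})=\bigcup_{\ell\to\mu^m\in\mathcal{P},\,r\in\operatorname{Supp}(\mu),\,t\trianglelefteq_\sharp r}\mathcal{U}_{\mathcal{P}}(t^\sharp)$. ADP problems, proof trees, soundness: an ADP problem is $\langle\mathcal{P},\mathcal{S}\rangle$ with $\mathcal{P}$ finite, $\mathcal{S}\subseteq\mathcal{P}$, solved iff $\mathcal{S}=\emptyset$. A processor maps an ADP problem to $(c,\{\langle\mathcal{P}_1,\mathcal{S}_1\rangle,\dots,\langle\mathcal{P}_n,\mathcal{S}_n\rangle\})$,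 $c\in\mathfrak{C}$. A proof tree is a finite tree with node labels $L_{\mathcal{A}}$ (ADP problems) and $L_{\mathcal{C}}$ (complexities) such that each inner node's labels and children arise by a processor application and leaves have $L_{\mathcal{C}}=\mathrm{Pol}_0$ if solved, $\omega$ otherwise. It is well formed if for each node $v$ with $L_{\mathcal{A}}(v)=\langle\mathcal{P},\mathcal{S}\rangle$ and root path $v_1,\dots,v_k=v$: $\iota_{\langle\mathcal{P},\mathcal{S}\rangle}\sqsubseteq L_{\mathcal{C}}(v_1)\oplus\dots\oplus L_{\mathcal{C}}(v_{k-1})\oplus\max\{L'_{\mathcal{C}}(w)\mid w$ reachable from $v$, including $v\}$ and $\iota_{\langle\mathcal{P},\mathcal{P}\setminus\mathcal{S}\rangle}\sqsubseteq L_{\mathcal{C}}(v_1)\oplus\dots\oplus L_{\mathcal{C}}(v_{k-1})$, with $L'_{\mathcal{C}}=L_{\mathcal{C}}$ on inner nodes and $\iota_{L_{\mathcal{A}}(w)}$ on leaves. A processor with $\mathrm{Proc}(\langle\mathcal{P},\mathcal{S}\rangle)=(c,\{\langle\mathcal{P}_i,\mathcal{S}_i\rangle\}_{i\le n})$ is sound if for every well-formed proof tree and node $v$ with $L_{\mathcal{A}}(v)=\langle\mathcal{P},\mathcal{S}\rangle$ and root path $v_1,\dots,v_k=v$: $\iota_{\langle\mathcal{P},\mathcal{S}\rangle}\sqsubseteq L_{\mathcal{C}}(v_1)\oplus\dots\oplus L_{\mathcal{C}}(v_{k-1})\oplus c\oplus\iota_{\langle\mathcal{P}_1,\mathcal{S}_1\rangle}\oplus\dots\oplus\iota_{\langle\mathcal{P}_n,\mathcal{S}_n\rangle}$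 and $\iota_{\langle\mathcal{P}_i,\mathcal{P}_i\setminus\mathcal{S}_i\rangle}\sqsubseteq L_{\mathcal{C}}(v_1)\oplus\dots\oplus L_{\mathcal{C}}(v_{k-1})\oplus c$ for all $i$. *)

theory Defs
  imports "HOL-Analysis.Analysis" "HOL-Library.Multiset"
begin

section \<open>Terms, positions, annotations\<close>

datatype ('f, 'v) trm = Var 'v | Fun 'f "('f, 'v) trm list"

text \<open>Annotated terms: a symbol is a pair (f, b) where b = True means the annotated copy f#.\<close>
type_synonym ('f, 'v) aterm = "('f \<times> bool, 'v) trm"

fun tsize :: "('f, 'v) trm \<Rightarrow> nat" where
  "tsize (Var x) = 1"
| "tsize (Fun f ts) = 1 + sum_list (map tsize ts)"

fun vars :: "('f, 'v) trm \<Rightarrow> 'v set" where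
  "vars (Var x) = {x}"
| "vars (Fun f ts) = (\<Union>t \<in> set ts. vars t)"

fun syms :: "('f, 'v) trm \<Rightarrow> 'f set" where
  "syms (Var x) = {}"
| "syms (Fun f ts) = insert f (\<Union>t \<in> set ts. syms t)"

fun subst :: "('v \<Rightarrow> ('f, 'w) trm) \<Rightarrow> ('f, 'v) trm \<Rightarrow> ('f, 'w) trm" where
  "subst \<sigma> (Var x) = \<sigma> x"
| "subst \<sigma> (Fun f ts) = Fun f (map (subst \<sigma>) ts)"

fun is_pos :: "nat list \<Rightarrow> ('f, 'v) trm \<Rightarrow> bool" where
  "is_pos [] t = True"
| "is_pos (i # p) (Fun f ts) = (i < length ts \<and> is_pos p (ts ! i))"
| "is_pos (i # p) (Var x) = False"

definition poss :: "('f, 'v) trm \<Rightarrow> nat list set" where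
  "poss t = {p. is_pos p t}"

fun subt_at :: "('f, 'v) trm \<Rightarrow> nat list \<Rightarrow> ('f, 'v) trm" where
  "subt_at t [] = t"
| "subt_at (Fun f ts) (i # p) = subt_at (ts ! i) p"
| "subt_at (Var x) (i # p) = Var x"

fun replace_at :: "('f, 'v) trm \<Rightarrow> nat list \<Rightarrow> ('f, 'v) trm \<Rightarrow> ('f, 'v) trm" where
  "replace_at t [] u = u"
| "replace_at (Fun f ts) (i # p) u = Fun f (ts[i := replace_at (ts ! i) p u])"
| "replace_at (Var x) (i # p) u = Var x"

fun root_sym :: "('f, 'v) trm \<Rightarrow> 'f option" where
  "root_sym (Var x) = None"
| "root_sym (Fun f ts) = Some f"

fun flat :: "('f, 'v) aterm \<Rightarrow> ('f, 'v) aterm" where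
  "flat (Var x) = Var x"
| "flat (Fun (f, b) ts) = Fun (f, False) (map flat ts)"

fun sharp :: "('f, 'v) aterm \<Rightarrow> ('f, 'v) aterm" where
  "sharp (Var x) = Var x"
| "sharp (Fun (f, b) ts) = Fun (f, True) ts"

fun flat_up :: "nat list \<Rightarrow> ('f, 'v) aterm \<Rightarrow> ('f, 'v) aterm" where
  "flat_up [] t = t"
| "flat_up (i # p) (Fun (f, b) ts) = Fun (f, False) (ts[i := flat_up p (ts ! i)])"
| "flat_up (i # p) (Var x) = Var x"

definition unannotated :: "('f, 'v) aterm \<Rightarrow> bool" where
  "unannotated t \<longleftrightarrow> (\<forall>(f, b) \<in> syms t. b = False)"

definition annotated_at :: "('f, 'v) aterm \<Rightarrow> nat list \<Rightarrow> bool" where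
  "annotated_at s p \<longleftrightarrow> p \<in> poss s \<and> (\<exists>f ts. subt_at s p = Fun (f, True) ts)"

definition ann_subterm :: "('f, 'v) aterm \<Rightarrow> ('f, 'v) aterm \<Rightarrow> bool" where
  "ann_subterm t s \<longleftrightarrow> (\<exists>p. annotated_at s p \<and> t = flat (subt_at s p))"

fun wf_trm :: "('f \<times> nat) set \<Rightarrow> ('f, 'v) aterm \<Rightarrow> bool" where
  "wf_trm Sig (Var x) = True"
| "wf_trm Sig (Fun (f, b) ts) = ((f, length ts) \<in> Sig \<and> (\<forall>t \<in> set ts. wf_trm Sig t))"

section \<open>Annotated dependency pairs\<close>

record ('f, 'v) adp =
  lhs :: "('f, 'v) aterm"
  dist :: "(real \<times> ('f, 'v) aterm) multiset"
  flag :: bool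

definition supp :: "('f, 'v) adp \<Rightarrow> ('f, 'v) aterm multiset" where
  "supp a = image_mset snd (dist a)"

definition valid_adp :: "('f \<times> nat) set \<Rightarrow> ('f, 'v) adp \<Rightarrow> bool" where
  "valid_adp Sig a \<longleftrightarrow>
     (\<exists>f ts. lhs a = Fun f ts) \<and> unannotated (lhs a) \<and> wf_trm Sig (lhs a) \<and>
     (\<forall>(p, r) \<in> set_mset (dist a). 0 < p \<and> p \<le> 1 \<and> wf_trm Sig r \<and> vars r \<subseteq> vars (lhs a)) \<and>
     sum_mset (image_mset fst (dist a)) = 1"

type_synonym ('f, 'v) adp_problem = "('f, 'v) adp set \<times> ('f, 'v) adp set"

definition valid_problem :: "('f \<times> nat) set \<Rightarrow> ('f, 'v) adp_problem \<Rightarrow> bool" where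
  "valid_problem Sig PS \<longleftrightarrow> finite (fst PS) \<and> snd PS \<subseteq> fst PS \<and> (\<forall>a \<in> fst PS. valid_adp Sig a)"

definition defined_syms :: "('f, 'v) adp set \<Rightarrow> ('f \<times> bool) set" where
  "defined_syms P = {f. \<exists>a \<in> P. root_sym (lhs a) = Some f}"

definition basic :: "('f \<times> nat) set \<Rightarrow> ('f, 'v) adp set \<Rightarrow> ('f, 'v) aterm \<Rightarrow> bool" where
  "basic Sig P t \<longleftrightarrow> wf_trm Sig t \<and>
     (\<exists>f ts. t = Fun (f, False) ts \<and> (f, False) \<in> defined_syms P \<and>
        (\<forall>u \<in> set ts. \<forall>(g, b) \<in> syms u. b = False \<and> (g, False) \<notin> defined_syms P))"

section \<open>Innermost rewriting with ADPs\<close>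

definition NF :: "('f, 'v) adp set \<Rightarrow> ('f, 'v) aterm \<Rightarrow> bool" where
  "NF P u \<longleftrightarrow> (\<forall>p \<in> poss u. \<forall>a \<in> P. \<forall>\<sigma>. flat (subt_at u p) \<noteq> subst \<sigma> (lhs a))"

text \<open>Cases: (at) flag true, p annotated; (af) flag false, p annotated;
         (nt) flag true, p not annotated; (nf) flag false, p not annotated.\<close>
definition step_result ::
  "('f, 'v) aterm \<Rightarrow> nat list \<Rightarrow> ('f, 'v) adp \<Rightarrow> ('v \<Rightarrow> ('f, 'v) aterm) \<Rightarrow> ('f, 'v) aterm \<Rightarrow> ('f, 'v) aterm" where
  "step_result s p a \<sigma> r =
     (let r' = (if annotated_at s p then r else flat r);
          s' = replace_at s p (subst \<sigma> r')
      in if flag a then s' else flat_up p s')"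

definition innermost_redex ::
  "('f, 'v) adp set \<Rightarrow> ('f, 'v) aterm \<Rightarrow> nat list \<Rightarrow> ('f, 'v) adp \<Rightarrow> ('v \<Rightarrow> ('f, 'v) aterm) \<Rightarrow> bool" where
  "innermost_redex P s p a \<sigma> \<longleftrightarrow>
     a \<in> P \<and> p \<in> poss s \<and>
     (annotated_at s p \<or> (\<exists>f. root_sym (subt_at s p) = Some f \<and> f \<in> defined_syms P)) \<and>
     flat (subt_at s p) = subst \<sigma> (lhs a) \<and>
     (\<forall>q \<in> poss (flat (subt_at s p)). q \<noteq> [] \<longrightarrow> NF P (subt_at (flat (subt_at s p)) q))"

section \<open>Chain trees\<close>

record ('f, 'v) ctree =
  ct_nodes :: "nat list set"
  ct_prob :: "nat list \<Rightarrow> real"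
  ct_term :: "nat list \<Rightarrow> ('f, 'v) aterm"
  ct_pos :: "nat list \<Rightarrow> nat list"
  ct_rule :: "nat list \<Rightarrow> ('f, 'v) adp"

definition ct_inner :: "('f, 'v) ctree \<Rightarrow> nat list \<Rightarrow> bool" where
  "ct_inner T v \<longleftrightarrow> v \<in> ct_nodes T \<and> (\<exists>i. v @ [i] \<in> ct_nodes T)"

text \<open>A P-chain tree: nodes are addressed by paths; children of v are v@[i], i < number of children
  (finitely branching); inner nodes record the ADP and position of the rewrite step used.\<close>
definition chain_tree :: "('f, 'v) adp set \<Rightarrow> ('f, 'v) ctree \<Rightarrow> bool" where
  "chain_tree P T \<longleftrightarrow>
     [] \<in> ct_nodes T \<and> ct_prob T [] = 1 \<and>
     (\<forall>v i. v @ [i] \<in> ct_nodes T \<longrightarrow> v \<in> ct_nodes T) \<and>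
     (\<forall>v. ct_inner T v \<longrightarrow>
        (let s = ct_term T v; p = ct_pos T v; a = ct_rule T v in
         \<exists>\<sigma> rs. innermost_redex P s p a \<sigma> \<and> mset rs = dist a \<and>
           (\<forall>i. v @ [i] \<in> ct_nodes T \<longleftrightarrow> i < length rs) \<and>
           (\<forall>i < length rs. ct_prob T (v @ [i]) = ct_prob T v * fst (rs ! i) \<and>
                            ct_term T (v @ [i]) = step_result s p a \<sigma> (snd (rs ! i)))))"

definition edl :: "('f, 'v) adp set \<Rightarrow> ('f, 'v) ctree \<Rightarrow> ennreal" where
  "edl S T = (\<Sum>\<^sub>\<infinity> v \<in> {v. ct_inner T v \<and> ct_rule T v \<in> S \<and> annotated_at (ct_term T v) (ct_pos T v)}.
                 ennreal (ct_prob T v))"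

definition edh :: "('f, 'v) adp set \<Rightarrow> ('f, 'v) adp set \<Rightarrow> ('f, 'v) aterm \<Rightarrow> ennreal" where
  "edh P S t = (SUP T \<in> {T. chain_tree P T \<and> ct_term T [] = sharp t}. edl S T)"

section \<open>Complexities\<close>

datatype cplx = Pol nat | Exp | TwoExp | Fin | Omega

fun ckey :: "cplx \<Rightarrow> nat \<times> nat" where
  "ckey (Pol a) = (0, a)"
| "ckey Exp = (1, 0)"
| "ckey TwoExp = (2, 0)"
| "ckey Fin = (3, 0)"
| "ckey Omega = (4, 0)"

definition cle :: "cplx \<Rightarrow> cplx \<Rightarrow> bool" where
  "cle x y \<longleftrightarrow> fst (ckey x) < fst (ckey y) \<or> (fst (ckey x) = fst (ckey y) \<and> snd (ckey x) \<le> snd (ckey y))"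

definition cmax :: "cplx \<Rightarrow> cplx \<Rightarrow> cplx" where
  "cmax x y = (if cle x y then y else x)"

definition cmax_list :: "cplx list \<Rightarrow> cplx" where
  "cmax_list xs = foldr cmax xs (Pol 0)"

definition bigO_pol :: "(nat \<Rightarrow> ennreal) \<Rightarrow> nat \<Rightarrow> bool" where
  "bigO_pol f a \<longleftrightarrow> (\<exists>c::real. \<forall>\<^sub>F n in sequentially. f n \<le> ennreal (c * real n ^ a))"

definition bigO_exp :: "(nat \<Rightarrow> ennreal) \<Rightarrow> bool" where
  "bigO_exp f \<longleftrightarrow> (\<exists>(c::real) (d::nat). \<forall>\<^sub>F n in sequentially. f n \<le> ennreal (c * 2 ^ (n ^ d)))"

definition bigO_2exp :: "(nat \<Rightarrow> ennreal) \<Rightarrow> bool" where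
  "bigO_2exp f \<longleftrightarrow> (\<exists>(c::real) (d::nat). \<forall>\<^sub>F n in sequentially. f n \<le> ennreal (c * 2 ^ (2 ^ (n ^ d))))"

definition iota :: "(nat \<Rightarrow> ennreal) \<Rightarrow> cplx" where
  "iota f = (if \<exists>a. bigO_pol f a then Pol (LEAST a. bigO_pol f a)
             else if bigO_exp f then Exp
             else if bigO_2exp f then TwoExp
             else if (\<forall>n. f n \<noteq> \<infinity>) then Fin
             else Omega)"

definition iota_problem :: "('f \<times> nat) set \<Rightarrow> ('f, 'v) adp set \<Rightarrow> ('f, 'v) adp set \<Rightarrow> cplx" where
  "iota_problem Sig P S =
     iota (\<lambda>n. SUP t \<in> {t. basic Sig P t \<and> tsize t \<le> n}. edh P S t)"

section \<open>Usable rules\<close>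

definition Rules :: "('f, 'v) adp set \<Rightarrow> 'f \<times> bool \<Rightarrow> ('f, 'v) adp set" where
  "Rules P f = {a \<in> P. flag a \<and> root_sym (lhs a) = Some f}"

text \<open>usable_in P t a: a \<in> U_P(t) (least solution of the recursive equations)\<close>
inductive usable_in :: "('f, 'v) adp set \<Rightarrow> ('f, 'v) aterm \<Rightarrow> ('f, 'v) adp \<Rightarrow> bool" where
  root: "a \<in> Rules P f \<Longrightarrow> usable_in P (Fun f ts) a"
| arg: "j < length ts \<Longrightarrow> usable_in (P - Rules P f) (ts ! j) a \<Longrightarrow> usable_in P (Fun f ts) a"
| rhs: "b \<in> Rules P f \<Longrightarrow> r \<in># supp b \<Longrightarrow> usable_in (P - Rules P f) (flat r) a
          \<Longrightarrow> usable_in P (Fun f ts) a"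

definition U :: "('f, 'v) adp set \<Rightarrow> ('f, 'v) adp set" where
  "U P = {a. \<exists>b \<in> P. \<exists>r. r \<in># supp b \<and> (\<exists>t. ann_subterm t r \<and> usable_in P (sharp t) a)}"

definition proc_UR :: "('f, 'v) adp_problem \<Rightarrow> cplx \<times> ('f, 'v) adp_problem list" where
  "proc_UR PS =
     (let P = fst PS; S = snd PS;
          P' = U P \<union> {a\<lparr>flag := False\<rparr> | a. a \<in> P - U P};
          S' = (S \<inter> U P) \<union> {a\<lparr>flag := False\<rparr> | a. a \<in> S - U P}
      in (Pol 0, [(P', S')]))"

section \<open>Proof trees and soundness\<close>

datatype ('f, 'v) ptree = PT "('f, 'v) adp_problem" cplx "('f, 'v) ptree list"

fun pt_A :: "('f, 'v) ptree \<Rightarrow> ('f, 'v) adp_problem" where "pt_A (PT A c cs) = A"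
fun pt_C :: "('f, 'v) ptree \<Rightarrow> cplx" where "pt_C (PT A c cs) = c"
fun pt_children :: "('f, 'v) ptree \<Rightarrow> ('f, 'v) ptree list" where "pt_children (PT A c cs) = cs"

fun pt_is_path :: "nat list \<Rightarrow> ('f, 'v) ptree \<Rightarrow> bool" where
  "pt_is_path [] T = True"
| "pt_is_path (i # p) (PT A c cs) = (i < length cs \<and> pt_is_path p (cs ! i))"

definition pt_paths :: "('f, 'v) ptree \<Rightarrow> nat list set" where
  "pt_paths T = {p. pt_is_path p T}"

fun pt_sub :: "('f, 'v) ptree \<Rightarrow> nat list \<Rightarrow> ('f, 'v) ptree" where
  "pt_sub T [] = T"
| "pt_sub (PT A c cs) (i # p) = pt_sub (cs ! i) p"

text \<open>L_C(v_1) + ... + L_C(v_{k-1}) along the root path to v (empty maximum = Pol_0)\<close>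
definition pt_anc :: "('f, 'v) ptree \<Rightarrow> nat list \<Rightarrow> cplx" where
  "pt_anc T v = cmax_list (map (\<lambda>j. pt_C (pt_sub T (take j v))) [0..<length v])"

definition iota_of :: "('f \<times> nat) set \<Rightarrow> ('f, 'v) adp_problem \<Rightarrow> cplx" where
  "iota_of Sig PS = iota_problem Sig (fst PS) (snd PS)"

definition pt_Lprime :: "('f \<times> nat) set \<Rightarrow> ('f, 'v) ptree \<Rightarrow> cplx" where
  "pt_Lprime Sig T = (if pt_children T = [] then iota_of Sig (pt_A T) else pt_C T)"

fun pt_reach_max :: "('f \<times> nat) set \<Rightarrow> ('f, 'v) ptree \<Rightarrow> cplx" where
  "pt_reach_max Sig (PT A c cs) = cmax (pt_Lprime Sig (PT A c cs)) (cmax_list (map (pt_reach_max Sig) cs))"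

definition proof_tree :: "('f \<times> nat) set \<Rightarrow> ('f, 'v) ptree \<Rightarrow> bool" where
  "proof_tree Sig T \<longleftrightarrow>
     (\<forall>v \<in> pt_paths T. valid_problem Sig (pt_A (pt_sub T v)) \<and>
        (pt_children (pt_sub T v) = [] \<longrightarrow>
           pt_C (pt_sub T v) = (if snd (pt_A (pt_sub T v)) = {} then Pol 0 else Omega)))"

definition well_formed :: "('f \<times> nat) set \<Rightarrow> ('f, 'v) ptree \<Rightarrow> bool" where
  "well_formed Sig T \<longleftrightarrow> proof_tree Sig T \<and>
     (\<forall>v \<in> pt_paths T.
        (let (P, S) = pt_A (pt_sub T v) in
          cle (iota_problem Sig P S) (cmax (pt_anc T v) (pt_reach_max Sig (pt_sub T v))) \<and>
          cle (iota_problem Sig P (P - S)) (pt_anc T v)))"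

definition sound_proc ::
  "('f \<times> nat) set \<Rightarrow> (('f, 'v) adp_problem \<Rightarrow> cplx \<times> ('f, 'v) adp_problem list) \<Rightarrow> bool" where
  "sound_proc Sig Proc \<longleftrightarrow>
     (\<forall>T v. well_formed Sig T \<longrightarrow> v \<in> pt_paths T \<longrightarrow>
        (let (P, S) = pt_A (pt_sub T v); (c, ps) = Proc (P, S) in
          cle (iota_problem Sig P S)
              (cmax_list ([pt_anc T v, c] @ map (iota_of Sig) ps)) \<and>
          (\<forall>(Pi, Si) \<in> set ps. cle (iota_problem Sig Pi (Pi - Si)) (cmax (pt_anc T v) c))))"

end

theory Submission
  imports Defs
begin


lemma flat_flat[simp]: "flat (flat t) = flat t"
  by (induction t rule: flat.induct) (auto simp: map_idI)

lemma poss_simps[simp]: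
  "[] \<in> poss t"
  "(i # p \<in> poss (Fun f ts)) \<longleftrightarrow> i < length ts \<and> p \<in> poss (ts ! i)"
  "i # p \<notin> poss (Var x)"
  by (auto simp: poss_def)

lemma poss_flat[simp]: "poss (flat t) = poss t"
proof -
  have "is_pos p (flat t) = is_pos p t" for p
  proof (induction p arbitrary: t)
    case Nil then show ?case by simp
  next
    case (Cons i p)
    show ?case
    proof (cases t rule: flat.cases)
      case (1 x) then show ?thesis by simp
    next
      case (2 f b ts) then show ?thesis by (cases "i < length ts") (simp_all add: Cons.IH)
    qed
  qed
  then show ?thesis by (auto simp: poss_def)
qed

lemma flat_subt: "p \<in> poss t \<Longrightarrow> flat (subt_at t p) = subt_at (flat t) p"
proof (induction p arbitrary: t)
  case Nil then show ?case by simp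
next
  case (Cons i p)
  then obtain f b ts where t: "t = Fun (f,b) ts" by (cases t) auto
  with Cons show ?case by auto
qed

lemma flat_replace: "p \<in> poss t \<Longrightarrow> flat (replace_at t p w) = replace_at (flat t) p (flat w)"
proof (induction p arbitrary: t)
  case Nil then show ?case by simp
next
  case (Cons i p)
  then obtain f b ts where t: "t = Fun (f,b) ts" by (cases t) auto
  with Cons show ?case by (auto simp: map_update)
qed

lemma flat_subst: "flat (subst \<sigma> t) = subst (\<lambda>x. flat (\<sigma> x)) (flat t)"
  by (induction t rule: flat.induct) auto

lemma subst_cong: "(\<And>x. x \<in> vars t \<Longrightarrow> \<sigma> x = \<tau> x) \<Longrightarrow> subst \<sigma> t = subst \<tau> t"
  by (induction t) auto

lemma vars_flat[simp]: "vars (flat t) = vars t"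
  by (induction t rule: flat.induct) auto

lemma flat_subst_var: "flat (subst \<sigma> l) = subst \<sigma> l \<Longrightarrow> x \<in> vars l \<Longrightarrow> flat (\<sigma> x) = \<sigma> x"
proof (induction l)
  case (Var y) then show ?case by simp
next
  case (Fun fb ts)
  obtain f b where fb: "fb = (f,b)" by (cases fb)
  from Fun.prems fb have "map flat (map (subst \<sigma>) ts) = map (subst \<sigma>) ts" by simp
  then have "\<forall>t\<in>set ts. flat (subst \<sigma> t) = subst \<sigma> t" by (simp add: map_eq_conv)
  with Fun show ?case by auto
qed

lemma subst_var_pos: "x \<in> vars l \<Longrightarrow> \<exists>q. q \<in> poss (subst \<sigma> l) \<and> subt_at (subst \<sigma> l) q = \<sigma> x \<and> (l \<noteq> Var x \<longrightarrow> q \<noteq> [])"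
proof (induction l)
  case (Var y) then show ?case by (intro exI[of _ "[]"]) auto
next
  case (Fun f ts)
  then obtain t where t: "t \<in> set ts" "x \<in> vars t" by auto
  then obtain i where i: "i < length ts" "ts ! i = t" by (auto simp: in_set_conv_nth)
  from Fun.IH[OF t] obtain q where "q \<in> poss (subst \<sigma> t)" "subt_at (subst \<sigma> t) q = \<sigma> x" by auto
  then show ?case using i by (intro exI[of _ "i # q"]) auto
qed

lemma NF_args: "NF P (Fun g us) \<Longrightarrow> u \<in> set us \<Longrightarrow> NF P u"
proof -
  assume nf: "NF P (Fun g us)" and u: "u \<in> set us"
  then obtain i where i: "i < length us" "us ! i = u" by (auto simp: in_set_conv_nth)
  show "NF P u" unfolding NF_def
  proof (intro ballI allI)
    fix p a \<sigma> assume "p \<in> poss u" "a \<in> P"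
    then have "i # p \<in> poss (Fun g us)" using i by auto
    with nf \<open>a \<in> P\<close> have "flat (subt_at (Fun g us) (i # p)) \<noteq> subst \<sigma> (lhs a)" unfolding NF_def by blast
    then show "flat (subt_at u p) \<noteq> subst \<sigma> (lhs a)" using i by simp
  qed
qed

lemma notNF: "a \<in> P \<Longrightarrow> flat u = subst \<sigma> (lhs a) \<Longrightarrow> \<not> NF P u"
  unfolding NF_def by (metis poss_simps(1) subt_at.simps(1))

fun good :: "('f, 'v) adp set \<Rightarrow> ('f, 'v) adp set \<Rightarrow> ('f, 'v) aterm \<Rightarrow> bool" where
  "good P X (Var x) = True"
| "good P X (Fun g us) = ((\<not> NF P (Fun g us) \<longrightarrow> Rules P g \<subseteq> X) \<and> (\<forall>u\<in>set us. good P X u))"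

fun invt :: "('f, 'v) adp set \<Rightarrow> ('f, 'v) adp set \<Rightarrow> ('f, 'v) aterm \<Rightarrow> bool" where
  "invt P X (Var x) = True"
| "invt P X (Fun (f, b) ts) = ((b \<longrightarrow> (\<forall>t\<in>set ts. good P X (flat t))) \<and> (\<forall>t\<in>set ts. invt P X t))"

fun annOK :: "('f, 'v) adp set \<Rightarrow> ('f, 'v) adp set \<Rightarrow> ('f, 'v) aterm \<Rightarrow> bool" where
  "annOK P X (Var x) = True"
| "annOK P X (Fun (f, b) ts) = ((b \<longrightarrow> (\<forall>t\<in>set ts. \<forall>g\<in>syms (flat t). Rules P g \<subseteq> X)) \<and> (\<forall>t\<in>set ts. annOK P X t))"

lemma NF_good: "NF P u \<Longrightarrow> good P X u"
  by (induction u) (auto dest: NF_args)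

lemma good_subst: "(\<And>g. g \<in> syms t \<Longrightarrow> Rules P g \<subseteq> X) \<Longrightarrow> (\<And>x. x \<in> vars t \<Longrightarrow> good P X (\<sigma> x)) \<Longrightarrow> good P X (subst \<sigma> t)"
proof (induction t)
  case (Var x) then show ?case by simp
next
  case (Fun g ts)
  have "good P X (subst \<sigma> t)" if "t \<in> set ts" for t
    by (rule Fun.IH[OF that]) (use Fun.prems that in fastforce)+
  then show ?case using Fun.prems by auto
qed

lemma good_pos: "good P X t \<Longrightarrow> q \<in> poss t \<Longrightarrow> \<not> NF P (subt_at t q) \<Longrightarrow> subt_at t q = Fun g us \<Longrightarrow> Rules P g \<subseteq> X"
proof (induction q arbitrary: t)
  case Nil then show ?case by auto
next
  case (Cons i q)
  then obtain h ts where t: "t = Fun h ts" by (cases t) auto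
  with Cons have "good P X (ts ! i)" "i < length ts" by auto
  with Cons.IH[of "ts ! i"] Cons.prems t show ?case by auto
qed

lemma inv_flat: "invt P X (flat t)"
  by (induction t rule: flat.induct) auto

lemma annOK_flat: "annOK P X (flat t)"
  by (induction t rule: flat.induct) auto



lemma Rules_split: "a \<in> Rules P g \<Longrightarrow> a \<notin> Rules P f \<Longrightarrow> a \<in> Rules (P - Rules P f) g"
  by (auto simp: Rules_def)

lemma Rules_usable: "g \<in> syms t \<Longrightarrow> a \<in> Rules P g \<Longrightarrow> usable_in P t a"
proof (induction t arbitrary: P)
  case (Var x) then show ?case by simp
next
  case (Fun f ts)
  show ?case
  proof (cases "a \<in> Rules P f")
    case True then show ?thesis by (rule usable_in.root)
  next
    case False
    with Fun.prems have "g \<noteq> f" by auto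
    with Fun.prems obtain t where t: "t \<in> set ts" "g \<in> syms t" by auto
    then obtain j where j: "j < length ts" "ts ! j = t" by (auto simp: in_set_conv_nth)
    have "usable_in (P - Rules P f) t a"
      by (rule Fun.IH[OF t]) (rule Rules_split[OF Fun.prems(2) False])
    then show ?thesis using j usable_in.arg[of j ts P f a] by simp
  qed
qed

lemma usable_closed: "usable_in Q t c \<Longrightarrow> r \<in># supp c \<Longrightarrow> g \<in> syms (flat r) \<Longrightarrow> d \<in> Rules Q g \<Longrightarrow> usable_in Q t d"
proof (induction rule: usable_in.induct)
  case (root c P f ts)
  show ?case
  proof (cases "d \<in> Rules P f")
    case True then show ?thesis by (rule usable_in.root)
  next
    case False
    have "usable_in (P - Rules P f) (flat r) d"
      by (rule Rules_usable[OF root.prems(2) Rules_split[OF root.prems(3) False]])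
    then show ?thesis by (rule usable_in.rhs[OF root.hyps root.prems(1)])
  qed
next
  case (arg j ts P f c)
  show ?case
  proof (cases "d \<in> Rules P f")
    case True then show ?thesis by (rule usable_in.root)
  next
    case False
    have "usable_in (P - Rules P f) (ts ! j) d"
      by (rule arg.IH[OF arg.prems(1,2) Rules_split[OF arg.prems(3) False]])
    then show ?thesis by (rule usable_in.arg[OF arg.hyps(1)])
  qed
next
  case (rhs b P f r' c ts)
  show ?case
  proof (cases "d \<in> Rules P f")
    case True then show ?thesis by (rule usable_in.root)
  next
    case False
    have "usable_in (P - Rules P f) (flat r') d"
      by (rule rhs.IH[OF rhs.prems(1,2) Rules_split[OF rhs.prems(3) False]])
    then show ?thesis by (rule usable_in.rhs[OF rhs.hyps(1,2)])
  qed
qed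

lemma usable_sub: "usable_in Q t a \<Longrightarrow> a \<in> Q \<and> flag a"
  by (induction rule: usable_in.induct) (auto simp: Rules_def)

definition closedX :: "('f, 'v) adp set \<Rightarrow> ('f, 'v) adp set \<Rightarrow> bool" where
  "closedX P X \<longleftrightarrow> (\<forall>c r g. c \<in> X \<longrightarrow> r \<in># supp c \<longrightarrow> g \<in> syms (flat r) \<longrightarrow> Rules P g \<subseteq> X)"

lemma U_closed: "closedX P (U P)"
  unfolding closedX_def U_def using usable_closed by blast

lemma U_sub: "a \<in> U P \<Longrightarrow> a \<in> P \<and> flag a"
  unfolding U_def using usable_sub by blast

lemma annOK_intro: "(\<And>p f ts. p \<in> poss r \<Longrightarrow> subt_at r p = Fun (f, True) ts \<Longrightarrow> (\<forall>t\<in>set ts. \<forall>g\<in>syms (flat t). Rules P g \<subseteq> X)) \<Longrightarrow> annOK P X r"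
proof (induction r)
  case (Var x) then show ?case by simp
next
  case (Fun fb ts)
  obtain f b where fb: "fb = (f, b)" by (cases fb)
  have 1: "annOK P X t" if t: "t \<in> set ts" for t
  proof (rule Fun.IH[OF t])
    fix p f' ts' assume "p \<in> poss t" "subt_at t p = Fun (f', True) ts'"
    moreover obtain i where "i < length ts" "ts ! i = t" using t by (auto simp: in_set_conv_nth)
    ultimately show "\<forall>t\<in>set ts'. \<forall>g\<in>syms (flat t). Rules P g \<subseteq> X"
      using Fun.prems[of "i # p" f' ts'] by auto
  qed
  have 2: "b \<Longrightarrow> (\<forall>t\<in>set ts. \<forall>g\<in>syms (flat t). Rules P g \<subseteq> X)"
    using Fun.prems[of "[]" f ts] fb by auto
  show ?case using 1 2 fb by auto
qed

lemma annOK_U: "b \<in> P \<Longrightarrow> r \<in># supp b \<Longrightarrow> annOK P (U P) r"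
proof (rule annOK_intro)
  fix p f ts assume b: "b \<in> P" "r \<in># supp b" and p: "p \<in> poss r" "subt_at r p = Fun (f, True) ts"
  have ann: "ann_subterm (flat (subt_at r p)) r"
    unfolding ann_subterm_def annotated_at_def using p by blast
  have sh: "sharp (flat (subt_at r p)) = Fun (f, True) (map flat ts)" using p by simp
  show "\<forall>t\<in>set ts. \<forall>g\<in>syms (flat t). Rules P g \<subseteq> U P"
  proof (intro ballI subsetI)
    fix t g a assume "t \<in> set ts" "g \<in> syms (flat t)" "a \<in> Rules P g"
    then have "usable_in P (sharp (flat (subt_at r p))) a"
      unfolding sh by (intro Rules_usable[of g]) auto
    then show "a \<in> U P" unfolding U_def using b ann by blast
  qed
qed

lemma invt_subst: "annOK P X r \<Longrightarrow> (\<And>x. x \<in> vars r \<Longrightarrow> flat (\<sigma> x) = \<sigma> x \<and> good P X (\<sigma> x)) \<Longrightarrow> invt P X (subst \<sigma> r)"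
proof (induction r)
  case (Var x)
  then have "flat (\<sigma> x) = \<sigma> x" by simp
  then show ?case using inv_flat[of P X "\<sigma> x"] by simp
next
  case (Fun fb ts)
  obtain f b where fb: "fb = (f, b)" by (cases fb)
  have 1: "invt P X (subst \<sigma> t)" if t: "t \<in> set ts" for t
    by (rule Fun.IH[OF t]) (use Fun.prems fb t in auto)
  have 2: "good P X (flat (subst \<sigma> t))" if t: "t \<in> set ts" and b for t
  proof -
    have "flat (subst \<sigma> t) = subst (\<lambda>x. flat (\<sigma> x)) (flat t)" by (rule flat_subst)
    also have "\<dots> = subst \<sigma> (flat t)"
      by (rule subst_cong) (use Fun.prems t fb in auto)
    moreover have "good P X (subst \<sigma> (flat t))"
    proof (rule good_subst)
      fix g assume "g \<in> syms (flat t)"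
      moreover have "\<forall>t\<in>set ts. \<forall>g\<in>syms (flat t). Rules P g \<subseteq> X"
        using Fun.prems(1) fb \<open>b\<close> by simp
      ultimately show "Rules P g \<subseteq> X" using t by blast
    next
      fix x assume "x \<in> vars (flat t)"
      then have "x \<in> vars (Fun fb ts)" using t by auto
      then show "good P X (\<sigma> x)" using Fun.prems(2)[of x] by simp
    qed
    ultimately show ?thesis by argo
  qed
  show ?case using 1 2 fb by auto
qed

lemma flat_Fun_fixed: "flat (Fun h ts) = Fun h ts \<Longrightarrow> u \<in> set ts \<Longrightarrow> flat u = u"
  by (cases h) (auto simp: map_eq_conv[where g = id, simplified] list_eq_iff_nth_eq in_set_conv_nth)

lemma NF_subt: "NF P u \<Longrightarrow> p \<in> poss u \<Longrightarrow> NF P (subt_at u p)"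
proof (induction p arbitrary: u)
  case Nil then show ?case by simp
next
  case (Cons i p)
  then obtain h ts where u: "u = Fun h ts" by (cases u) auto
  with Cons.prems have "ts ! i \<in> set ts" "NF P (Fun h ts)" by auto
  then have "NF P (ts ! i)" using NF_args by blast
  with Cons u show ?case by auto
qed

lemma flat_fixed_subt: "flat t = t \<Longrightarrow> p \<in> poss t \<Longrightarrow> flat (subt_at t p) = subt_at t p"
  by (metis flat_subt)

lemma good_replace:
  assumes "closedX P X" "a \<in> P" "flag a" "\<exists>f ls. lhs a = Fun f ls" "r \<in># supp a"
    "\<And>x. x \<in> vars r \<Longrightarrow> good P X (\<sigma> x)"
  shows "good P X t \<Longrightarrow> flat t = t \<Longrightarrow> q \<in> poss t \<Longrightarrow> subt_at t q = subst \<sigma> (lhs a) \<Longrightarrow>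
    good P X (replace_at t q (subst \<sigma> (flat r)))"
proof (induction q arbitrary: t)
  case Nil
  from assms(4) obtain f ls where l: "lhs a = Fun f ls" by auto
  with Nil have t: "t = Fun f (map (subst \<sigma>) ls)" by simp
  have "\<not> NF P t" using notNF[OF assms(2)] Nil by simp
  with Nil t have "Rules P f \<subseteq> X" by simp
  moreover have "a \<in> Rules P f" using assms(2,3) l by (simp add: Rules_def)
  ultimately have aX: "a \<in> X" by blast
  have "good P X (subst \<sigma> (flat r))"
  proof (rule good_subst)
    fix g assume "g \<in> syms (flat r)"
    then show "Rules P g \<subseteq> X" using assms(1,5) aX unfolding closedX_def by blast
  next
    fix x assume "x \<in> vars (flat r)" then show "good P X (\<sigma> x)" using assms(6) by simp
  qed
  then show ?case by simp
next
  case (Cons i q)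
  then obtain h ts where t: "t = Fun h ts" by (cases t) auto
  with Cons.prems have i: "i < length ts" "q \<in> poss (ts ! i)" by auto
  have fi: "flat (ts ! i) = ts ! i" using flat_Fun_fixed Cons.prems(2) t i nth_mem by metis
  have gi: "good P X (ts ! i)" using Cons.prems(1) t i by simp
  have IH: "good P X (replace_at (ts ! i) q (subst \<sigma> (flat r)))"
    using Cons.IH[OF gi fi i(2)] Cons.prems(4) t by simp
  have "\<not> NF P (subt_at t (i # q))"
    using notNF[OF assms(2)] Cons.prems flat_fixed_subt by metis
  then have "\<not> NF P t" using NF_subt Cons.prems(3) by blast
  then have "Rules P h \<subseteq> X" using Cons.prems(1) t by simp
  moreover have "\<forall>u\<in>set (ts[i := replace_at (ts ! i) q (subst \<sigma> (flat r))]). good P X u"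
    using IH Cons.prems(1) t by (auto dest: set_update_subset_insert[THEN subsetD])
  ultimately show ?case using t by simp
qed



lemma invt_replace_true:
  assumes "closedX P X" "a \<in> P" "flag a" "\<exists>f ls. lhs a = Fun f ls" "r \<in># supp a"
    "\<And>x. x \<in> vars r \<Longrightarrow> good P X (\<sigma> x)" "invt P X w" "flat w = subst \<sigma> (flat r)"
  shows "invt P X s \<Longrightarrow> p \<in> poss s \<Longrightarrow> flat (subt_at s p) = subst \<sigma> (lhs a) \<Longrightarrow>
    invt P X (replace_at s p w)"
proof (induction p arbitrary: s)
  case Nil then show ?case using assms(7) by simp
next
  case (Cons i p)
  then obtain f b ts where s: "s = Fun (f, b) ts" by (cases s) auto
  with Cons.prems have i: "i < length ts" "p \<in> poss (ts ! i)" by auto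
  have invi: "invt P X (ts ! i)" using Cons.prems(1) s i nth_mem by fastforce
  have IH: "invt P X (replace_at (ts ! i) p w)"
    using Cons.IH[OF invi i(2)] Cons.prems(3) s by simp
  have G: "good P X (flat (replace_at (ts ! i) p w))" if b
  proof -
    have "flat (replace_at (ts ! i) p w) = replace_at (flat (ts ! i)) p (subst \<sigma> (flat r))"
      using flat_replace[OF i(2)] assms(8) by simp
    moreover have "good P X (flat (ts ! i))" using Cons.prems(1) s i nth_mem that by fastforce
    moreover have "subt_at (flat (ts ! i)) p = subst \<sigma> (lhs a)"
      using flat_subt[OF i(2)] Cons.prems(3) s by simp
    ultimately show ?thesis
      using good_replace[OF assms(1-6), where t="flat (ts ! i)" and q=p] i(2) by simp
  qed
  have "\<forall>u\<in>set (ts[i := replace_at (ts ! i) p w]). invt P X u"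
    using IH Cons.prems(1) s by (auto dest: set_update_subset_insert[THEN subsetD])
  moreover have "b \<longrightarrow> (\<forall>u\<in>set (ts[i := replace_at (ts ! i) p w]). good P X (flat u))"
    using G Cons.prems(1) s by (auto dest: set_update_subset_insert[THEN subsetD])
  ultimately show ?case using s by simp
qed

lemma invt_replace_false:
  "invt P X s \<Longrightarrow> p \<in> poss s \<Longrightarrow> invt P X w \<Longrightarrow> invt P X (flat_up p (replace_at s p w))"
proof (induction p arbitrary: s)
  case Nil then show ?case by simp
next
  case (Cons i p)
  then obtain f b ts where s: "s = Fun (f, b) ts" by (cases s) auto
  with Cons.prems have i: "i < length ts" "p \<in> poss (ts ! i)" by auto
  have invi: "invt P X (ts ! i)" using Cons.prems(1) s i nth_mem by fastforce
  have IH: "invt P X (flat_up p (replace_at (ts ! i) p w))"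
    using Cons.IH[OF invi i(2) Cons.prems(3)] .
  have "\<forall>u\<in>set (ts[i := flat_up p (replace_at (ts ! i) p w)]). invt P X u"
    using IH Cons.prems(1) s by (auto dest: set_update_subset_insert[THEN subsetD])
  then show ?case using s i by simp
qed

lemma no_ann_above:
  assumes "a \<in> P" "flag a" "a \<notin> X" "\<exists>f ls. lhs a = Fun f ls"
  shows "invt P X s \<Longrightarrow> p \<in> poss s \<Longrightarrow> flat (subt_at s p) = subst \<sigma> (lhs a) \<Longrightarrow>
    flat_up p (replace_at s p w) = replace_at s p w"
proof (induction p arbitrary: s)
  case Nil then show ?case by simp
next
  case (Cons i p)
  then obtain f b ts where s: "s = Fun (f, b) ts" by (cases s) auto
  with Cons.prems have i: "i < length ts" "p \<in> poss (ts ! i)" by auto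
  have invi: "invt P X (ts ! i)" using Cons.prems(1) s i nth_mem by fastforce
  have IH: "flat_up p (replace_at (ts ! i) p w) = replace_at (ts ! i) p w"
    using Cons.IH[OF invi i(2)] Cons.prems(3) s by simp
  have nb: "\<not> b"
  proof
    assume b
    then have g: "good P X (flat (ts ! i))" using Cons.prems(1) s i nth_mem by fastforce
    obtain g ls where l: "lhs a = Fun g ls" using assms(4) by auto
    have u: "subt_at (flat (ts ! i)) p = subst \<sigma> (lhs a)"
      using flat_subt[OF i(2)] Cons.prems(3) s by simp
    have "\<not> NF P (subt_at (flat (ts ! i)) p)"
      using notNF[OF assms(1)] u flat_fixed_subt[of "flat (ts ! i)" p] i(2) by simp
    then have "Rules P g \<subseteq> X" using good_pos[OF g] i(2) u l by simp
    moreover have "a \<in> Rules P g" using assms(1,2) l by (simp add: Rules_def)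
    ultimately show False using assms(3) by blast
  qed
  show ?case using s i nb IH by simp
qed

lemma sigma_facts:
  assumes "flat u = subst \<sigma> l" "\<exists>f ls. l = Fun f ls"
    "\<forall>q\<in>poss (flat u). q \<noteq> [] \<longrightarrow> NF Q (subt_at (flat u) q)" "x \<in> vars l"
  shows "NF Q (\<sigma> x) \<and> flat (\<sigma> x) = \<sigma> x"
proof
  have "flat (subst \<sigma> l) = subst \<sigma> l" using flat_flat[of u] unfolding assms(1) .
  then show "flat (\<sigma> x) = \<sigma> x" by (rule flat_subst_var[OF _ assms(4)])
next
  obtain q where q: "q \<in> poss (subst \<sigma> l)" "subt_at (subst \<sigma> l) q = \<sigma> x" "l \<noteq> Var x \<longrightarrow> q \<noteq> []"
    using subst_var_pos[OF assms(4)] by blast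
  have qq: "q \<in> poss (flat u)" unfolding assms(1) by (rule q(1))
  have "q \<noteq> []" using q(3) assms(2) by auto
  then have "NF Q (subt_at (flat u) q)" using assms(3) qq by blast
  then have "NF Q (subt_at (subst \<sigma> l) q)" unfolding assms(1) .
  then show "NF Q (\<sigma> x)" using q(2) by simp
qed

lemma step_invt:
  assumes "closedX P X" "invt P X s" "innermost_redex Q s p a \<sigma>" "NF Q = NF P"
    "\<exists>f ls. lhs a = Fun f ls" "r \<in># supp a" "vars r \<subseteq> vars (lhs a)" "annOK P X r"
    "flag a \<Longrightarrow> a \<in> P"
  shows "invt P X (step_result s p a \<sigma> r)"
proof -
  from assms(3) have p: "p \<in> poss s" and m: "flat (subt_at s p) = subst \<sigma> (lhs a)"
    and inn: "\<forall>q\<in>poss (flat (subt_at s p)). q \<noteq> [] \<longrightarrow> NF Q (subt_at (flat (subt_at s p)) q)"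
    unfolding innermost_redex_def by blast+
  have sf: "NF P (\<sigma> x) \<and> flat (\<sigma> x) = \<sigma> x" if "x \<in> vars (lhs a)" for x
    using sigma_facts[OF m assms(5) inn that] assms(4) by simp
  have sfg: "good P X (\<sigma> x)" if "x \<in> vars (lhs a)" for x
    using sf[OF that] NF_good[of P "\<sigma> x" X] by simp
  have sff: "flat (\<sigma> x) = \<sigma> x" if "x \<in> vars (lhs a)" for x
    using sf[OF that] by simp
  define r' where "r' = (if annotated_at s p then r else flat r)"
  have vr: "vars r' \<subseteq> vars (lhs a)" using assms(7) by (simp add: r'_def)
  have aok: "annOK P X r'" unfolding r'_def using assms(8) annOK_flat[of P X r] by simp
  have iw: "invt P X (subst \<sigma> r')"
  proof (rule invt_subst[OF aok])
    fix x assume "x \<in> vars r'"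
    then have "x \<in> vars (lhs a)" using vr by blast
    then show "flat (\<sigma> x) = \<sigma> x \<and> good P X (\<sigma> x)" using sfg sff by simp
  qed
  have sgr: "good P X (\<sigma> x)" if "x \<in> vars r" for x
    using sfg that assms(7) by blast
  show ?thesis
  proof (cases "flag a")
    case True
    have "flat (subst \<sigma> r') = subst (\<lambda>x. flat (\<sigma> x)) (flat r)"
      by (simp add: flat_subst r'_def)
    also have "\<dots> = subst \<sigma> (flat r)"
    proof (rule subst_cong)
      fix x assume "x \<in> vars (flat r)"
      then have "x \<in> vars (lhs a)" using assms(7) by auto
      then show "flat (\<sigma> x) = \<sigma> x" by (rule sff)
    qed
    finally have fw: "flat (subst \<sigma> r') = subst \<sigma> (flat r)" .
    have "invt P X (replace_at s p (subst \<sigma> r'))"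
      by (rule invt_replace_true[OF assms(1) assms(9)[OF True] True assms(5,6) sgr iw fw assms(2) p m])
    then show ?thesis using True by (simp add: step_result_def r'_def Let_def)
  next
    case False
    have "invt P X (flat_up p (replace_at s p (subst \<sigma> r')))"
      by (rule invt_replace_false[OF assms(2) p iw])
    then show ?thesis using False by (simp add: step_result_def r'_def Let_def)
  qed
qed



lemma subt_syms: "p \<in> poss u \<Longrightarrow> subt_at u p = Fun g us \<Longrightarrow> g \<in> syms u"
proof (induction p arbitrary: u)
  case Nil then show ?case by auto
next
  case (Cons i p)
  then obtain h ts where u: "u = Fun h ts" by (cases u) auto
  with Cons have "g \<in> syms (ts ! i)" by auto
  with Cons u show ?case using nth_mem by fastforce
qed

lemma flat_unann: "(\<forall>(g, b)\<in>syms u. b = False) \<Longrightarrow> flat u = u"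
  by (induction u rule: flat.induct) (auto simp: map_idI)

lemma base_invt:
  assumes "basic Sig P t" "\<forall>a\<in>P. \<exists>f ls. lhs a = Fun f ls"
  shows "invt P X (sharp t)"
proof -
  from assms(1) obtain f ts where t: "t = Fun (f, False) ts"
    and ar: "\<forall>u\<in>set ts. \<forall>(g, b)\<in>syms u. b = False \<and> (g, False) \<notin> defined_syms P"
    unfolding basic_def by blast
  have fN: "flat u = u \<and> NF P u" if u: "u \<in> set ts" for u
  proof
    have fu: "flat u = u" using ar u flat_unann[of u] by auto
    then show "flat u = u" .
    show "NF P u" unfolding NF_def
    proof (intro ballI allI notI)
      fix p a \<sigma> assume p: "p \<in> poss u" and a: "a \<in> P" and eq: "flat (subt_at u p) = subst \<sigma> (lhs a)"
      obtain g ls where l: "lhs a = Fun g ls" using assms(2) a by blast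
      have "subt_at u p = Fun g (map (subst \<sigma>) ls)"
        using eq l flat_fixed_subt[OF fu p] by simp
      then have gs: "g \<in> syms u" by (rule subt_syms[OF p])
      have gd: "g \<in> defined_syms P" unfolding defined_syms_def using a l by force
      obtain g0 b where g: "g = (g0, b)" by (cases g)
      from ar u gs g have "b = False" "(g0, False) \<notin> defined_syms P" by auto
      then show False using gd g by simp
    qed
  qed
  have "good P X (flat u) \<and> invt P X u" if u: "u \<in> set ts" for u
  proof
    have "flat u = u" "NF P u" using fN[OF u] by auto
    then show "good P X (flat u)" using NF_good by simp
    show "invt P X u" using inv_flat[of P X u] \<open>flat u = u\<close> by simp
  qed
  then show ?thesis using t by simp
qed

lemma inner_step:
  assumes "chain_tree Q T" "v @ [i] \<in> ct_nodes T"
  shows "ct_inner T v \<and> (\<exists>\<sigma> rs. innermost_redex Q (ct_term T v) (ct_pos T v) (ct_rule T v) \<sigma> \<and>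
     mset rs = dist (ct_rule T v) \<and> i < length rs \<and>
     ct_term T (v @ [i]) = step_result (ct_term T v) (ct_pos T v) (ct_rule T v) \<sigma> (snd (rs ! i)))"
proof -
  have inner: "ct_inner T v" using assms unfolding chain_tree_def ct_inner_def by blast
  have "\<exists>\<sigma> rs. innermost_redex Q (ct_term T v) (ct_pos T v) (ct_rule T v) \<sigma> \<and> mset rs = dist (ct_rule T v) \<and>
           (\<forall>i. v @ [i] \<in> ct_nodes T \<longleftrightarrow> i < length rs) \<and>
           (\<forall>i < length rs. ct_prob T (v @ [i]) = ct_prob T v * fst (rs ! i) \<and>
                            ct_term T (v @ [i]) = step_result (ct_term T v) (ct_pos T v) (ct_rule T v) \<sigma> (snd (rs ! i)))"
    using assms(1) inner unfolding chain_tree_def Let_def by blast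
  then obtain \<sigma> rs where H: "innermost_redex Q (ct_term T v) (ct_pos T v) (ct_rule T v) \<sigma>" "mset rs = dist (ct_rule T v)"
           "\<forall>i. v @ [i] \<in> ct_nodes T \<longleftrightarrow> i < length rs"
           "\<forall>i < length rs. ct_prob T (v @ [i]) = ct_prob T v * fst (rs ! i) \<and>
                            ct_term T (v @ [i]) = step_result (ct_term T v) (ct_pos T v) (ct_rule T v) \<sigma> (snd (rs ! i))"
    by blast
  have "i < length rs" using H(3) assms(2) by blast
  then show ?thesis using inner H by blast
qed

lemma supp_nth: "mset rs = dist a \<Longrightarrow> i < length rs \<Longrightarrow> snd (rs ! i) \<in># supp a"
  unfolding supp_def by (metis image_eqI in_multiset_in_set nth_mem set_image_mset)

lemma tree_invt:
  assumes "closedX P X" "chain_tree Q T" "ct_term T [] = sharp t" "basic Sig P t" "NF Q = NF P"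
    "\<forall>a\<in>P. \<exists>f ls. lhs a = Fun f ls"
    "\<And>a. a \<in> Q \<Longrightarrow> (\<exists>f ls. lhs a = Fun f ls) \<and> (\<forall>r. r \<in># supp a \<longrightarrow> vars r \<subseteq> vars (lhs a) \<and> annOK P X r) \<and> (flag a \<longrightarrow> a \<in> P)"
  shows "v \<in> ct_nodes T \<Longrightarrow> invt P X (ct_term T v)"
proof (induction v rule: rev_induct)
  case Nil then show ?case using base_invt[OF assms(4,6)] assms(3) by simp
next
  case (snoc i v)
  from inner_step[OF assms(2) snoc.prems] obtain \<sigma> rs where
    inn: "ct_inner T v" "innermost_redex Q (ct_term T v) (ct_pos T v) (ct_rule T v) \<sigma>"
    "mset rs = dist (ct_rule T v)" "i < length rs"
    "ct_term T (v @ [i]) = step_result (ct_term T v) (ct_pos T v) (ct_rule T v) \<sigma> (snd (rs ! i))"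
    by blast
  have vn: "v \<in> ct_nodes T" using inn(1) ct_inner_def by blast
  have aQ: "ct_rule T v \<in> Q" using inn(2) innermost_redex_def by blast
  have r: "snd (rs ! i) \<in># supp (ct_rule T v)" using supp_nth inn(3,4) by blast
  show ?case unfolding inn(5)
    by (rule step_invt[OF assms(1) snoc.IH[OF vn] inn(2) assms(5)]) (use assms(7)[OF aQ] r in auto)
qed

lemma NF_mono: "lhs ` B \<subseteq> lhs ` A \<Longrightarrow> NF A u \<Longrightarrow> NF B u"
  unfolding NF_def
proof (intro ballI allI)
  fix p b \<sigma>
  assume sub: "lhs ` B \<subseteq> lhs ` A" and nf: "\<forall>p\<in>poss u. \<forall>a\<in>A. \<forall>\<sigma>. flat (subt_at u p) \<noteq> subst \<sigma> (lhs a)"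
    and p: "p \<in> poss u" and b: "b \<in> B"
  from sub b obtain a where a: "a \<in> A" "lhs a = lhs b" by (metis imageE image_eqI subsetD)
  from nf p a(1) have "flat (subt_at u p) \<noteq> subst \<sigma> (lhs a)" by blast
  then show "flat (subt_at u p) \<noteq> subst \<sigma> (lhs b)" using a(2) by simp
qed

lemma lhs_eq_NF: "lhs ` A = lhs ` B \<Longrightarrow> NF A = NF B"
proof (rule ext)
  fix u assume e: "lhs ` A = lhs ` B"
  then have 1: "lhs ` B \<subseteq> lhs ` A" and 2: "lhs ` A \<subseteq> lhs ` B" by simp_all
  show "NF A u = NF B u" using NF_mono[OF 1, of u] NF_mono[OF 2, of u] by blast
qed

lemma lhs_eq_def: "lhs ` A = lhs ` B \<Longrightarrow> defined_syms A = defined_syms B"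
proof -
  assume e: "lhs ` A = lhs ` B"
  have H: "defined_syms C = {f. \<exists>l\<in>lhs ` C. root_sym l = Some f}" for C :: "('a, 'b) adp set"
    unfolding defined_syms_def by auto
  show ?thesis by (simp only: H e)
qed

lemma step_result_flag: "flag a = flag b \<Longrightarrow> step_result s p a \<sigma> r = step_result s p b \<sigma> r"
  unfolding step_result_def by simp



lemma redex_transfer:
  assumes "innermost_redex Q s p a \<sigma>" "b \<in> Q'" "lhs b = lhs a" "lhs ` Q' = lhs ` Q"
  shows "innermost_redex Q' s p b \<sigma>"
proof -
  have "NF Q' = NF Q" "defined_syms Q' = defined_syms Q"
    using lhs_eq_NF[OF assms(4)] lhs_eq_def[OF assms(4)] by auto
  then have E1: "NF Q' = NF Q" and E2: "defined_syms Q' = defined_syms Q" by auto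
  show ?thesis using assms(1,2) unfolding innermost_redex_def assms(3) E1 E2 by blast
qed

lemma tree_transfer:
  assumes ct: "chain_tree Q T" and lq: "lhs ` Q' = lhs ` Q"
    and m: "\<And>v. ct_inner T v \<Longrightarrow> m (ct_rule T v) \<in> Q' \<and> lhs (m (ct_rule T v)) = lhs (ct_rule T v) \<and>
       dist (m (ct_rule T v)) = dist (ct_rule T v) \<and>
       (\<forall>\<sigma> r. innermost_redex Q (ct_term T v) (ct_pos T v) (ct_rule T v) \<sigma> \<longrightarrow>
          step_result (ct_term T v) (ct_pos T v) (m (ct_rule T v)) \<sigma> r =
          step_result (ct_term T v) (ct_pos T v) (ct_rule T v) \<sigma> r)"
  shows "chain_tree Q' (T\<lparr>ct_rule := \<lambda>v. m (ct_rule T v)\<rparr>)"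
proof -
  let ?T = "T\<lparr>ct_rule := \<lambda>v. m (ct_rule T v)\<rparr>"
  have inner: "ct_inner ?T v = ct_inner T v" for v by (simp add: ct_inner_def)
  have A: "[] \<in> ct_nodes T \<and> ct_prob T [] = 1 \<and> (\<forall>v i. v @ [i] \<in> ct_nodes T \<longrightarrow> v \<in> ct_nodes T)"
    using ct unfolding chain_tree_def by blast
  have B: "\<exists>\<sigma> rs. innermost_redex Q' (ct_term T v) (ct_pos T v) (m (ct_rule T v)) \<sigma> \<and> mset rs = dist (m (ct_rule T v)) \<and>
           (\<forall>i. v @ [i] \<in> ct_nodes T \<longleftrightarrow> i < length rs) \<and>
           (\<forall>i < length rs. ct_prob T (v @ [i]) = ct_prob T v * fst (rs ! i) \<and>
              ct_term T (v @ [i]) = step_result (ct_term T v) (ct_pos T v) (m (ct_rule T v)) \<sigma> (snd (rs ! i)))"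
    if iv: "ct_inner T v" for v
  proof -
    have "\<exists>\<sigma> rs. innermost_redex Q (ct_term T v) (ct_pos T v) (ct_rule T v) \<sigma> \<and> mset rs = dist (ct_rule T v) \<and>
           (\<forall>i. v @ [i] \<in> ct_nodes T \<longleftrightarrow> i < length rs) \<and>
           (\<forall>i < length rs. ct_prob T (v @ [i]) = ct_prob T v * fst (rs ! i) \<and>
              ct_term T (v @ [i]) = step_result (ct_term T v) (ct_pos T v) (ct_rule T v) \<sigma> (snd (rs ! i)))"
      using ct iv unfolding chain_tree_def Let_def by blast
    then obtain \<sigma> rs where H: "innermost_redex Q (ct_term T v) (ct_pos T v) (ct_rule T v) \<sigma>"
      "mset rs = dist (ct_rule T v)" "\<forall>i. v @ [i] \<in> ct_nodes T \<longleftrightarrow> i < length rs"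
      "\<forall>i < length rs. ct_prob T (v @ [i]) = ct_prob T v * fst (rs ! i) \<and>
              ct_term T (v @ [i]) = step_result (ct_term T v) (ct_pos T v) (ct_rule T v) \<sigma> (snd (rs ! i))"
      by blast
    have mv: "m (ct_rule T v) \<in> Q'" "lhs (m (ct_rule T v)) = lhs (ct_rule T v)"
       "dist (m (ct_rule T v)) = dist (ct_rule T v)"
       "\<And>r. step_result (ct_term T v) (ct_pos T v) (m (ct_rule T v)) \<sigma> r =
          step_result (ct_term T v) (ct_pos T v) (ct_rule T v) \<sigma> r"
      using m[OF iv] H(1) by blast+
    have "innermost_redex Q' (ct_term T v) (ct_pos T v) (m (ct_rule T v)) \<sigma>"
      by (rule redex_transfer[OF H(1) mv(1,2) lq])
    then show ?thesis using H mv by (intro exI[of _ \<sigma>] exI[of _ rs]) simp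
  qed
  show ?thesis unfolding chain_tree_def Let_def
    using A B by (simp add: inner)
qed

lemma edl_transfer:
  assumes "\<And>v. ct_inner T v \<Longrightarrow> ct_rule T v \<in> S \<Longrightarrow> annotated_at (ct_term T v) (ct_pos T v) \<Longrightarrow> m (ct_rule T v) \<in> S'"
  shows "edl S T \<le> edl S' (T\<lparr>ct_rule := \<lambda>v. m (ct_rule T v)\<rparr>)"
  unfolding edl_def
  apply (rule infsum_mono_neutral)
      apply (rule nonneg_summable_on_complete, simp)
     apply (rule nonneg_summable_on_complete, simp)
  using assms by (auto simp: ct_inner_def)

lemma step_eq:
  assumes "invt P X s" "innermost_redex Q s p a \<sigma>" "b \<in> P" "lhs b = lhs a" "b \<notin> X"
    "\<exists>f ls. lhs b = Fun f ls" "flag b" "\<not> flag a"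
  shows "step_result s p a \<sigma> r = step_result s p b \<sigma> r"
proof -
  from assms(2) have p: "p \<in> poss s" and m: "flat (subt_at s p) = subst \<sigma> (lhs b)"
    unfolding innermost_redex_def using assms(4) by auto
  show ?thesis
    unfolding step_result_def Let_def using assms(7,8)
    by (simp add: no_ann_above[OF assms(3) assms(7) assms(5) assms(6) assms(1) p m])
qed

definition PU :: "('f, 'v) adp set \<Rightarrow> ('f, 'v) adp set" where
  "PU P = U P \<union> {a\<lparr>flag := False\<rparr> | a. a \<in> P - U P}"

definition SU :: "('f, 'v) adp set \<Rightarrow> ('f, 'v) adp set \<Rightarrow> ('f, 'v) adp set" where
  "SU P S = (S \<inter> U P) \<union> {a\<lparr>flag := False\<rparr> | a. a \<in> S - U P}"

lemma lhs_PU: "lhs ` PU P = lhs ` P"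
proof
  show "lhs ` PU P \<subseteq> lhs ` P" unfolding PU_def using U_sub by force
  show "lhs ` P \<subseteq> lhs ` PU P"
  proof
    fix l assume "l \<in> lhs ` P"
    then obtain a where a: "a \<in> P" "l = lhs a" by blast
    show "l \<in> lhs ` PU P"
    proof (cases "a \<in> U P")
      case True then show ?thesis unfolding PU_def using a by blast
    next
      case False
      then have "a\<lparr>flag := False\<rparr> \<in> PU P" unfolding PU_def using a by blast
      moreover have "l = lhs (a\<lparr>flag := False\<rparr>)" using a by simp
      ultimately show ?thesis by (rule rev_image_eqI)
    qed
  qed
qed

lemma basic_PU: "basic Sig (PU P) = basic Sig P"
  using lhs_eq_def[OF lhs_PU[of P]] by (simp add: basic_def[abs_def])

definition goodQ :: "('f, 'v) adp set \<Rightarrow> ('f, 'v) adp set \<Rightarrow> bool" where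
  "goodQ P Q \<longleftrightarrow> (\<forall>a\<in>Q. (\<exists>f ls. lhs a = Fun f ls) \<and> (\<forall>r. r \<in># supp a \<longrightarrow> vars r \<subseteq> vars (lhs a) \<and> annOK P (U P) r) \<and> (flag a \<longrightarrow> a \<in> P))"

definition validP :: "('f, 'v) adp set \<Rightarrow> bool" where
  "validP P \<longleftrightarrow> (\<forall>a\<in>P. (\<exists>f ls. lhs a = Fun f ls) \<and> (\<forall>r. r \<in># supp a \<longrightarrow> vars r \<subseteq> vars (lhs a)))"

lemma goodQ_P: "validP P \<Longrightarrow> goodQ P P"
  unfolding goodQ_def validP_def using annOK_U by blast

lemma supp_upd[simp]: "supp (a\<lparr>flag := x\<rparr>) = supp a"
  by (simp add: supp_def)

lemma goodQ_PU: "validP P \<Longrightarrow> goodQ P (PU P)"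
  unfolding goodQ_def PU_def
proof
  fix a assume V: "validP P" and a: "a \<in> U P \<union> {a\<lparr>flag := False\<rparr> | a. a \<in> P - U P}"
  show "(\<exists>f ls. lhs a = Fun f ls) \<and> (\<forall>r. r \<in># supp a \<longrightarrow> vars r \<subseteq> vars (lhs a) \<and> annOK P (U P) r) \<and> (flag a \<longrightarrow> a \<in> P)"
  proof (cases "a \<in> U P")
    case True
    then have "a \<in> P" using U_sub by blast
    then show ?thesis using V annOK_U unfolding validP_def by blast
  next
    case False
    with a obtain b where b: "b \<in> P" "a = b\<lparr>flag := False\<rparr>" by blast
    then show ?thesis using V annOK_U[OF b(1)] unfolding validP_def by auto
  qed
qed

lemma tree_invt':
  assumes "validP P" "chain_tree Q T" "ct_term T [] = sharp t" "basic Sig P t" "lhs ` Q = lhs ` P" "goodQ P Q"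
    "v \<in> ct_nodes T"
  shows "invt P (U P) (ct_term T v)"
proof (rule tree_invt[OF U_closed assms(2,3,4) lhs_eq_NF[OF assms(5)] _ _ assms(7)])
  show "\<forall>a\<in>P. \<exists>f ls. lhs a = Fun f ls" using assms(1) unfolding validP_def by blast
  fix a assume "a \<in> Q" then show "(\<exists>f ls. lhs a = Fun f ls) \<and> (\<forall>r. r \<in># supp a \<longrightarrow> vars r \<subseteq> vars (lhs a) \<and> annOK P (U P) r) \<and> (flag a \<longrightarrow> a \<in> P)"
    using assms(6) unfolding goodQ_def by blast
qed

lemma dirA:
  assumes V: "validP P" and ct: "chain_tree P T" and r: "ct_term T [] = sharp t" and b: "basic Sig P t"
  shows "\<exists>T'. chain_tree (PU P) T' \<and> ct_term T' [] = sharp t \<and> edl S T \<le> edl (SU P S) T'"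
proof -
  define m where "m a = (if a \<in> U P then a else a\<lparr>flag := False\<rparr>)" for a :: "('a, 'b) adp"
  let ?T = "T\<lparr>ct_rule := \<lambda>v. m (ct_rule T v)\<rparr>"
  have inv: "invt P (U P) (ct_term T v)" if "v \<in> ct_nodes T" for v
    by (rule tree_invt'[OF V ct r b refl goodQ_P[OF V] that])
  have "chain_tree (PU P) ?T"
  proof (rule tree_transfer[OF ct lhs_PU])
    fix v assume iv: "ct_inner T v"
    let ?a = "ct_rule T v"
    have aP: "?a \<in> P" if "innermost_redex P (ct_term T v) (ct_pos T v) (ct_rule T v) \<sigma>" for \<sigma>
      using that innermost_redex_def by blast
    have vn: "v \<in> ct_nodes T" using iv ct_inner_def by blast
    have aP': "?a \<in> P"
    proof -
      have "\<exists>\<sigma>. innermost_redex P (ct_term T v) (ct_pos T v) (ct_rule T v) \<sigma>"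
        using ct iv unfolding chain_tree_def Let_def by blast
      then show ?thesis using aP by blast
    qed
    have 1: "m ?a \<in> PU P" unfolding m_def PU_def using aP' by auto
    have 2: "lhs (m ?a) = lhs ?a" "dist (m ?a) = dist ?a" unfolding m_def by auto
    have 3: "step_result (ct_term T v) (ct_pos T v) (m ?a) \<sigma> r' = step_result (ct_term T v) (ct_pos T v) ?a \<sigma> r'"
      if red: "innermost_redex P (ct_term T v) (ct_pos T v) ?a \<sigma>" for \<sigma> r'
    proof (cases "?a \<in> U P \<or> \<not> flag ?a")
      case True
      then have "flag (m ?a) = flag ?a" unfolding m_def by auto
      then show ?thesis by (rule step_result_flag)
    next
      case False
      then have ma: "m ?a = ?a\<lparr>flag := False\<rparr>" unfolding m_def by auto
      have red': "innermost_redex (PU P) (ct_term T v) (ct_pos T v) (m ?a) \<sigma>"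
        by (rule redex_transfer[OF red 1 2(1) lhs_PU])
      have lf: "\<exists>f ls. lhs ?a = Fun f ls" using V aP' unfolding validP_def by blast
      show ?thesis
        by (rule step_eq[OF inv[OF vn] red' aP']) (use False ma lf in auto)
    qed
    show "m ?a \<in> PU P \<and> lhs (m ?a) = lhs ?a \<and> dist (m ?a) = dist ?a \<and>
       (\<forall>\<sigma> r. innermost_redex P (ct_term T v) (ct_pos T v) ?a \<sigma> \<longrightarrow>
          step_result (ct_term T v) (ct_pos T v) (m ?a) \<sigma> r = step_result (ct_term T v) (ct_pos T v) ?a \<sigma> r)"
      using 1 2 3 by blast
  qed
  moreover have "edl S T \<le> edl (SU P S) ?T"
    by (rule edl_transfer) (auto simp: m_def SU_def)
  ultimately show ?thesis using r by (intro exI[of _ ?T]) simp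
qed



lemma dirB:
  assumes V: "validP P" and ct: "chain_tree (PU P) T" and r: "ct_term T [] = sharp t" and b: "basic Sig P t"
  shows "\<exists>T'. chain_tree P T' \<and> ct_term T' [] = sharp t \<and> edl (PU P - SU P S) T \<le> edl (P - S) T'"
proof -
  define m where "m b = (if b \<in> U P then b else (SOME a. a \<in> P - U P \<and> b = a\<lparr>flag := False\<rparr>))" for b :: "('a, 'b) adp"
  have mb: "m b \<in> P - U P \<and> b = (m b)\<lparr>flag := False\<rparr>" if "b \<in> PU P" "b \<notin> U P" for b
  proof -
    have "\<exists>a. a \<in> P - U P \<and> b = a\<lparr>flag := False\<rparr>" using that unfolding PU_def by blast
    then have "(SOME a. a \<in> P - U P \<and> b = a\<lparr>flag := False\<rparr>) \<in> P - U P \<and> b = (SOME a. a \<in> P - U P \<and> b = a\<lparr>flag := False\<rparr>)\<lparr>flag := False\<rparr>"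
      by (rule someI_ex)
    then show ?thesis using that(2) unfolding m_def by simp
  qed
  have mP: "m b \<in> P" "lhs (m b) = lhs b" "dist (m b) = dist b" if "b \<in> PU P" for b
  proof -
    show "m b \<in> P"
      using mb[OF that] U_sub unfolding m_def by (cases "b \<in> U P") auto
    show "lhs (m b) = lhs b"
    proof (cases "b \<in> U P")
      case True then show ?thesis unfolding m_def by simp
    next
      case False
      then have "b = (m b)\<lparr>flag := False\<rparr>" using mb[OF that] by blast
      then have "lhs b = lhs ((m b)\<lparr>flag := False\<rparr>)" by simp
      then show ?thesis by simp
    qed
    show "dist (m b) = dist b"
    proof (cases "b \<in> U P")
      case True then show ?thesis unfolding m_def by simp
    next
      case False
      then have "b = (m b)\<lparr>flag := False\<rparr>" using mb[OF that] by blast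
      then have "dist b = dist ((m b)\<lparr>flag := False\<rparr>)" by simp
      then show ?thesis by simp
    qed
  qed
  let ?T = "T\<lparr>ct_rule := \<lambda>v. m (ct_rule T v)\<rparr>"
  have inv: "invt P (U P) (ct_term T v)" if "v \<in> ct_nodes T" for v
    by (rule tree_invt'[OF V ct r b lhs_PU goodQ_PU[OF V] that])
  have "chain_tree P ?T"
  proof (rule tree_transfer[OF ct lhs_PU[symmetric]])
    fix v assume iv: "ct_inner T v"
    let ?a = "ct_rule T v"
    have vn: "v \<in> ct_nodes T" using iv ct_inner_def by blast
    have aP': "?a \<in> PU P"
    proof -
      have "\<exists>\<sigma>. innermost_redex (PU P) (ct_term T v) (ct_pos T v) (ct_rule T v) \<sigma>"
        using ct iv unfolding chain_tree_def Let_def by blast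
      then show ?thesis unfolding innermost_redex_def by blast
    qed
    have 3: "step_result (ct_term T v) (ct_pos T v) (m ?a) \<sigma> r' = step_result (ct_term T v) (ct_pos T v) ?a \<sigma> r'"
      if red: "innermost_redex (PU P) (ct_term T v) (ct_pos T v) ?a \<sigma>" for \<sigma> r'
    proof (cases "?a \<in> U P")
      case True
      then show ?thesis unfolding m_def by simp
    next
      case False
      note M = mb[OF aP' False]
      have fa: "\<not> flag ?a" using M by (metis adp.select_convs(3) adp.surjective adp.update_convs(3))
      show ?thesis
      proof (cases "flag (m ?a)")
        case False
        then show ?thesis using fa by (intro step_result_flag) simp
      next
        case True
        have lf: "\<exists>f ls. lhs (m ?a) = Fun f ls" using V mP(1)[OF aP'] unfolding validP_def by blast
        have "step_result (ct_term T v) (ct_pos T v) ?a \<sigma> r' = step_result (ct_term T v) (ct_pos T v) (m ?a) \<sigma> r'"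
          by (rule step_eq[OF inv[OF vn] red mP(1)[OF aP'] mP(2)[OF aP']]) (use M lf True fa in auto)
        then show ?thesis by simp
      qed
    qed
    show "m ?a \<in> P \<and> lhs (m ?a) = lhs ?a \<and> dist (m ?a) = dist ?a \<and>
       (\<forall>\<sigma> r. innermost_redex (PU P) (ct_term T v) (ct_pos T v) ?a \<sigma> \<longrightarrow>
          step_result (ct_term T v) (ct_pos T v) (m ?a) \<sigma> r = step_result (ct_term T v) (ct_pos T v) ?a \<sigma> r)"
      using mP[OF aP'] 3 by blast
  qed
  moreover have "edl (PU P - SU P S) T \<le> edl (P - S) ?T"
  proof (rule edl_transfer)
    fix v assume "ct_rule T v \<in> PU P - SU P S"
    then have bP: "ct_rule T v \<in> PU P" and bS: "ct_rule T v \<notin> SU P S" by auto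
    show "m (ct_rule T v) \<in> P - S"
    proof (cases "ct_rule T v \<in> U P")
      case True
      then show ?thesis using bS U_sub unfolding m_def SU_def by auto
    next
      case False
      note M = mb[OF bP False]
      have "m (ct_rule T v) \<notin> S"
      proof
        assume "m (ct_rule T v) \<in> S"
        then have "ct_rule T v \<in> SU P S" unfolding SU_def using M by blast
        then show False using bS by blast
      qed
      then show ?thesis using M by blast
    qed
  qed
  ultimately show ?thesis using r by (intro exI[of _ ?T]) simp
qed

lemma edh_le:
  assumes "\<And>T. chain_tree P T \<Longrightarrow> ct_term T [] = sharp t \<Longrightarrow> \<exists>T'. chain_tree P' T' \<and> ct_term T' [] = sharp t \<and> edl S T \<le> edl S' T'"
  shows "edh P S t \<le> edh P' S' t"
  unfolding edh_def
proof (rule SUP_mono)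
  fix T assume "T \<in> {T. chain_tree P T \<and> ct_term T [] = sharp t}"
  then obtain T' where "chain_tree P' T' \<and> ct_term T' [] = sharp t \<and> edl S T \<le> edl S' T'"
    using assms by blast
  then show "\<exists>T'\<in>{T. chain_tree P' T \<and> ct_term T [] = sharp t}. edl S T \<le> edl S' T'" by blast
qed

lemma bigO_pol_mono: "(\<And>n. f n \<le> g n) \<Longrightarrow> bigO_pol g a \<Longrightarrow> bigO_pol f a"
proof -
  assume fg: "\<And>n. f n \<le> g n" and "bigO_pol g a"
  then obtain c :: real where ev: "\<forall>\<^sub>F n in sequentially. g n \<le> ennreal (c * real n ^ a)"
    unfolding bigO_pol_def by blast
  have "\<forall>\<^sub>F n in sequentially. f n \<le> ennreal (c * real n ^ a)"
    using ev by (rule eventually_mono) (use fg order_trans in blast)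
  then show ?thesis unfolding bigO_pol_def by blast
qed

lemma bigO_exp_mono: "(\<And>n. f n \<le> g n) \<Longrightarrow> bigO_exp g \<Longrightarrow> bigO_exp f"
proof -
  assume fg: "\<And>n. f n \<le> g n" and "bigO_exp g"
  then obtain c :: real and d :: nat where ev: "\<forall>\<^sub>F n in sequentially. g n \<le> ennreal (c * 2 ^ (n ^ d))"
    unfolding bigO_exp_def by blast
  have "\<forall>\<^sub>F n in sequentially. f n \<le> ennreal (c * 2 ^ (n ^ d))"
    using ev by (rule eventually_mono) (use fg order_trans in blast)
  then show ?thesis unfolding bigO_exp_def by blast
qed

lemma bigO_2exp_mono: "(\<And>n. f n \<le> g n) \<Longrightarrow> bigO_2exp g \<Longrightarrow> bigO_2exp f"
proof -
  assume fg: "\<And>n. f n \<le> g n" and "bigO_2exp g"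
  then obtain c :: real and d :: nat where ev: "\<forall>\<^sub>F n in sequentially. g n \<le> ennreal (c * 2 ^ (2 ^ (n ^ d)))"
    unfolding bigO_2exp_def by blast
  have "\<forall>\<^sub>F n in sequentially. f n \<le> ennreal (c * 2 ^ (2 ^ (n ^ d)))"
    using ev by (rule eventually_mono) (use fg order_trans in blast)
  then show ?thesis unfolding bigO_2exp_def by blast
qed

lemma iota_mono:
  assumes fg: "\<And>n. f n \<le> g n"
  shows "cle (iota f) (iota g)"
proof -
  note P = bigO_pol_mono[OF fg] and E = bigO_exp_mono[OF fg] and E2 = bigO_2exp_mono[OF fg]
  have F: "f n \<noteq> \<infinity>" if "\<forall>n. g n \<noteq> \<infinity>" for n
  proof
    assume "f n = \<infinity>"
    then have "g n = \<infinity>" using fg[of n] by (simp add: top_unique)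
    then show False using that by blast
  qed
  show ?thesis
  proof (cases "\<exists>a. bigO_pol g a")
    case True
    then have pg: "bigO_pol g (LEAST a. bigO_pol g a)" by (rule LeastI_ex)
    then have pf: "bigO_pol f (LEAST a. bigO_pol g a)" by (rule P)
    then have le: "(LEAST a. bigO_pol f a) \<le> (LEAST a. bigO_pol g a)" by (rule Least_le)
    have "iota g = Pol (LEAST a. bigO_pol g a)" using True unfolding iota_def by simp
    moreover have "iota f = Pol (LEAST a. bigO_pol f a)" using pf unfolding iota_def by auto
    ultimately show ?thesis using le by (simp add: cle_def)
  next
    case nP: False
    show ?thesis
    proof (cases "bigO_exp g")
      case True
      then have "iota g = Exp" using nP unfolding iota_def by simp
      moreover have "iota f = Exp \<or> (\<exists>a. iota f = Pol a)" using E[OF True] unfolding iota_def by auto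
      ultimately show ?thesis by (auto simp: cle_def)
    next
      case nE: False
      show ?thesis
      proof (cases "bigO_2exp g")
        case True
        then have "iota g = TwoExp" using nP nE unfolding iota_def by simp
        moreover have "iota f = TwoExp \<or> iota f = Exp \<or> (\<exists>a. iota f = Pol a)" using E2[OF True] unfolding iota_def by auto
        ultimately show ?thesis by (auto simp: cle_def)
      next
        case nE2: False
        show ?thesis
        proof (cases "\<forall>n. g n \<noteq> \<infinity>")
          case True
          then have "iota g = Fin" using nP nE nE2 unfolding iota_def by simp
          moreover have "iota f \<noteq> Omega" using F[OF True] unfolding iota_def by auto
          ultimately show ?thesis by (cases "iota f") (auto simp: cle_def)
        next
          case False
          then have "iota g = Omega" using nP nE nE2 unfolding iota_def by simp
          then show ?thesis by (cases "iota f") (auto simp: cle_def)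
        qed
      qed
    qed
  qed
qed

lemma cle_refl: "cle x x" by (simp add: cle_def)
lemma cle_trans: "cle x y \<Longrightarrow> cle y z \<Longrightarrow> cle x z" by (auto simp: cle_def)
lemma cle_total: "cle x y \<or> cle y x" by (auto simp: cle_def)
lemma cle_cmax1: "cle x y \<Longrightarrow> cle x (cmax y z)"
  unfolding cmax_def using cle_trans by auto
lemma cle_cmax2: "cle x z \<Longrightarrow> cle x (cmax y z)"
proof -
  assume xz: "cle x z"
  show ?thesis
  proof (cases "cle y z")
    case True then show ?thesis using xz by (simp add: cmax_def)
  next
    case False
    then have "cle z y" using cle_total by blast
    then have "cle x y" using xz by (rule cle_trans[rotated])
    then show ?thesis using False by (simp add: cmax_def)
  qed
qed



lemma valid_validP: "\<forall>a\<in>P. valid_adp Sig a \<Longrightarrow> validP P"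
  unfolding validP_def
proof
  fix a assume H: "\<forall>a\<in>P. valid_adp Sig a" and a: "a \<in> P"
  then have va: "valid_adp Sig a" by blast
  then have 1: "\<exists>f ls. lhs a = Fun f ls" unfolding valid_adp_def by blast
  have 2: "vars r \<subseteq> vars (lhs a)" if "r \<in># supp a" for r
  proof -
    from that obtain pr where pr: "pr \<in># dist a" "r = snd pr" unfolding supp_def by auto
    obtain p r' where "pr = (p, r')" by (cases pr)
    with pr va show ?thesis unfolding valid_adp_def by auto
  qed
  show "(\<exists>f ls. lhs a = Fun f ls) \<and> (\<forall>r. r \<in># supp a \<longrightarrow> vars r \<subseteq> vars (lhs a))"
    using 1 2 by blast
qed

lemma key1: "validP P \<Longrightarrow> cle (iota_problem Sig P S) (iota_problem Sig (PU P) (SU P S))"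
proof -
  assume V: "validP P"
  have le: "edh P S t \<le> edh (PU P) (SU P S) t" if "basic Sig P t" for t
    by (rule edh_le) (rule dirA[OF V _ _ that])
  show ?thesis unfolding iota_problem_def basic_PU
    by (intro iota_mono SUP_mono) (use le in auto)
qed

lemma key2: "validP P \<Longrightarrow> cle (iota_problem Sig (PU P) (PU P - SU P S)) (iota_problem Sig P (P - S))"
proof -
  assume V: "validP P"
  have le: "edh (PU P) (PU P - SU P S) t \<le> edh P (P - S) t" if "basic Sig P t" for t
    by (rule edh_le) (rule dirB[OF V _ _ that])
  show ?thesis unfolding iota_problem_def basic_PU
    by (intro iota_mono SUP_mono) (use le in auto)
qed

theorem mainTheorem5:
  fixes Sig :: "('f \<times> nat) set"
  assumes "finite Sig"
  shows "sound_proc Sig (proc_UR :: ('f, 'v) adp_problem \<Rightarrow> cplx \<times> ('f, 'v) adp_problem list)"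
  unfolding sound_proc_def
proof (intro allI impI)
  fix T :: "('f, 'v) ptree" and v
  assume wf: "well_formed Sig T" and vp: "v \<in> pt_paths T"
  obtain P S where A: "pt_A (pt_sub T v) = (P, S)" by (cases "pt_A (pt_sub T v)")
  have "valid_problem Sig (pt_A (pt_sub T v))"
    using wf vp unfolding well_formed_def proof_tree_def by blast
  then have "\<forall>a\<in>P. valid_adp Sig a" using A unfolding valid_problem_def by simp
  then have V: "validP P" by (rule valid_validP)
  have "let (P, S) = pt_A (pt_sub T v) in
          cle (iota_problem Sig P S) (cmax (pt_anc T v) (pt_reach_max Sig (pt_sub T v))) \<and>
          cle (iota_problem Sig P (P - S)) (pt_anc T v)"
    using wf vp unfolding well_formed_def by blast
  then have wf2: "cle (iota_problem Sig P (P - S)) (pt_anc T v)" using A by simp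
  have pr: "(proc_UR :: ('f, 'v) adp_problem \<Rightarrow> cplx \<times> ('f, 'v) adp_problem list) (P, S) = (Pol 0, [(PU P, SU P S)])"
    by (simp add: proc_UR_def PU_def SU_def Let_def)
  have g1: "cle (iota_problem Sig P S)
      (cmax (pt_anc T v) (cmax (Pol 0) (cmax (iota_problem Sig (PU P) (SU P S)) (Pol 0))))"
    by (rule cle_cmax2[OF cle_cmax2[OF cle_cmax1[OF key1[OF V]]]])
  have g2: "cle (iota_problem Sig (PU P) (PU P - SU P S)) (cmax (pt_anc T v) (Pol 0))"
    by (rule cle_cmax1[OF cle_trans[OF key2[OF V] wf2]])
  show "let (P, S) = pt_A (pt_sub T v); (c, ps) = (proc_UR :: ('f, 'v) adp_problem \<Rightarrow> cplx \<times> ('f, 'v) adp_problem list) (P, S) in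
          cle (iota_problem Sig P S) (cmax_list ([pt_anc T v, c] @ map (iota_of Sig) ps)) \<and>
          (\<forall>(Pi, Si)\<in>set ps. cle (iota_problem Sig Pi (Pi - Si)) (cmax (pt_anc T v) c))"
    unfolding A using g1 g2 by (simp add: pr cmax_list_def iota_of_def)
qed

end
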